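(* For integers $0\le k\le n$, the Bernoulli numbers satisfy \[ \sum_{j=0}^{n-k}\binom{n-k}{j}B_{j+k}=\begin{cases} \sum_{j=0}^{k}\binom{k}{j}(-1)^{j}B_{n-j} & \text{if } 0\le k\le n-2,\ n\ge2,\\[2pt] \sum_{j=0}^{k}\binom{k}{j}(-1)^{j}B_{n-j}+(-1)^{n-1} & \text{if } k=n-1,\ n\ge1,\\[2pt] \sum_{j=0}^{k}\binom{k}{j}(-1)^{j}B_{n-j}+n(-1)^{n-1} & \text{if } k=n,\ n\ge0. \end{cases} \]
   Context: The Bernoulli numbers $B_n$ are defined by $\sum_{n\ge0}B_n\frac{t^n}{n!}=\frac{t}{e^t-1}$ (so $B_1=-\frac12$). *)

theory Defs
  imports "HOL-Computational_Algebra.Formal_Power_Series"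
begin

text \<open>Bernoulli numbers via the exponential generating function
  sum B_n t^n/n! = t/(e^t - 1) (so B_1 = -1/2), as formal power series over the reals.\<close>
definition bernoulli_num :: "nat \<Rightarrow> real" where
  "bernoulli_num n = fact n * fps_nth (fps_X / (fps_exp 1 - 1)) n"

end

theory Submission
  imports Defs
begin

unbundle fps_syntax

definition Bf :: "real fps" where "Bf = fps_X / (fps_exp 1 - 1)"

lemma bern_nth: "Bf $ n = bernoulli_num n / fact n"
  unfolding bernoulli_num_def Bf_def by simp

lemma Bf_mult: "Bf * (fps_exp 1 - 1) = fps_X"
proof -
  have ne: "(fps_exp 1 - 1 :: real fps) \<noteq> 0"
  proof
    assume "(fps_exp 1 - 1 :: real fps) = 0"
    hence "(fps_exp 1 - 1 :: real fps) $ 1 = 0" by simp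
    thus False by simp
  qed
  have "subdegree (fps_exp 1 - 1 :: real fps) \<le> 1"
    by (rule subdegree_leI) simp
  hence "subdegree (fps_exp 1 - 1 :: real fps) \<le> subdegree (fps_X :: real fps)" by simp
  thus ?thesis unfolding Bf_def using fps_times_divide_eq[OF ne] by blast
qed

lemma Bf_key: "fps_exp (-1) * Bf = Bf - fps_X * fps_exp (-1)"
proof -
  have EE: "fps_exp (-1) * fps_exp 1 = (1 :: real fps)"
    using fps_exp_add_mult[of "-1::real" 1] by simp
  have "fps_exp (-1) * Bf - Bf = Bf * (fps_exp (-1) - 1)" by (simp add: algebra_simps)
  also have "fps_exp (-1) - 1 = - ((fps_exp 1 - 1) * fps_exp (-1) :: real fps)"
    using EE by (simp add: algebra_simps)
  also have "Bf * \<dots> = - ((Bf * (fps_exp 1 - 1)) * fps_exp (-1))" by (simp add: algebra_simps)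
  also have "\<dots> = - (fps_X * fps_exp (-1))" by (simp add: Bf_mult)
  finally show ?thesis by (simp add: algebra_simps)
qed

lemma b0: "(\<Sum>j\<le>k. real (k choose j) * (-1)^j * bernoulli_num (k-j))
   = bernoulli_num k + real k * (-1)^k"
proof -
  have e0: "(fps_exp (-1) * Bf) $ k = (Bf - fps_X * fps_exp (-1)) $ k" by (simp add: Bf_key)
  hence "(\<Sum>j=0..k. (-1)^j / fact j * (bernoulli_num (k-j) / fact (k-j)))
        = bernoulli_num k / fact k - (if k = 0 then 0 else (-1)^(k-1) / fact (k-1))"
  proof -
    have l: "(fps_exp (-1) * Bf) $ k = (\<Sum>j=0..k. (-1)^j / fact j * (bernoulli_num (k-j) / fact (k-j)))"
      by (simp add: fps_mult_nth bern_nth)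
    have r: "(Bf - fps_X * fps_exp (-1)) $ k = bernoulli_num k / fact k - (if k = 0 then 0 else (-1)^(k-1) / fact (k-1))"
      by (simp add: bern_nth)
    show ?thesis using e0 l r by simp
  qed
  hence "fact k * (\<Sum>j=0..k. (-1)^j / fact j * (bernoulli_num (k-j) / fact (k-j)))
        = fact k * (bernoulli_num k / fact k - (if k = 0 then 0 else (-1)^(k-1) / fact (k-1)))"
    by simp
  moreover have "fact k * (\<Sum>j=0..k. (-1)^j / fact j * (bernoulli_num (k-j) / fact (k-j)))
      = (\<Sum>j\<le>k. real (k choose j) * (-1)^j * bernoulli_num (k-j))"
    unfolding sum_distrib_left atLeast0AtMost
    by (rule sum.cong) (auto simp: binomial_fact field_simps)
  moreover have "fact k * (bernoulli_num k / fact k - (if k = 0 then 0 else (-1)^(k-1) / fact (k-1)))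
      = bernoulli_num k + real k * (-1)^k"
  proof (cases k)
    case (Suc m)
    have f1: "fact (Suc m) * (bernoulli_num (Suc m) / fact (Suc m)) = bernoulli_num (Suc m)"
      by simp
    have f2: "fact (Suc m) * ((-1::real)^m / fact m) = real (Suc m) * (-1)^m"
      by (simp add: fact_Suc)
    show ?thesis using f1 f2 Suc by (simp add: right_diff_distrib)
  qed simp
  ultimately show ?thesis by simp
qed

lemma pascal_sum:
  fixes g :: "nat \<Rightarrow> real"
  shows "(\<Sum>j\<le>Suc m. real (Suc m choose j) * g j)
       = (\<Sum>j\<le>m. real (m choose j) * g j) + (\<Sum>j\<le>m. real (m choose j) * g (Suc j))"
proof -
  have "(\<Sum>j\<le>Suc m. real (Suc m choose j) * g j)
      = g 0 + (\<Sum>j\<le>m. real (Suc m choose Suc j) * g (Suc j))"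
    by (subst sum.atMost_Suc_shift) simp
  also have "\<dots> = g 0 + (\<Sum>j\<le>m. real (m choose Suc j) * g (Suc j))
      + (\<Sum>j\<le>m. real (m choose j) * g (Suc j))"
    by (simp add: sum.distrib algebra_simps)
  also have "g 0 + (\<Sum>j\<le>m. real (m choose Suc j) * g (Suc j)) = (\<Sum>j\<le>Suc m. real (m choose j) * g j)"
    by (subst sum.atMost_Suc_shift) simp
  also have "\<dots> = (\<Sum>j\<le>m. real (m choose j) * g j)" by simp
  finally show ?thesis .
qed

definition A :: "nat \<Rightarrow> nat \<Rightarrow> real" where
  "A m k = (\<Sum>j\<le>m. real (m choose j) * bernoulli_num (j+k))"
definition Bs :: "nat \<Rightarrow> nat \<Rightarrow> real" where
  "Bs m k = (\<Sum>j\<le>k. real (k choose j) * (-1)^j * bernoulli_num (m+k-j))"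
definition D where "D m k = A m k - Bs m k"

lemma A_rec: "A (Suc m) k = A m k + A m (Suc k)"
  unfolding A_def by (subst pascal_sum) simp

lemma Bs_rec: "Bs m (Suc k) = Bs (Suc m) k - Bs m k"
proof -
  have "Bs m (Suc k) = (\<Sum>j\<le>Suc k. real (Suc k choose j) * ((-1)^j * bernoulli_num (m+Suc k-j)))"
    unfolding Bs_def by (simp add: mult.assoc)
  also have "\<dots> = (\<Sum>j\<le>k. real (k choose j) * ((-1)^j * bernoulli_num (m+Suc k-j)))
     + (\<Sum>j\<le>k. real (k choose j) * ((-1)^(Suc j) * bernoulli_num (m+Suc k-Suc j)))"
    by (rule pascal_sum)
  also have "(\<Sum>j\<le>k. real (k choose j) * ((-1)^j * bernoulli_num (m+Suc k-j))) = Bs (Suc m) k"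
    unfolding Bs_def by (simp add: mult.assoc)
  also have "(\<Sum>j\<le>k. real (k choose j) * ((-1)^(Suc j) * bernoulli_num (m+Suc k-Suc j))) = - Bs m k"
    unfolding Bs_def by (simp add: sum_negf[symmetric] mult.assoc)
  finally show ?thesis by simp
qed

lemma D_rec: "D (Suc m) k = D m k + D m (Suc k)"
  unfolding D_def using A_rec[of m k] Bs_rec[of m k] by simp

lemma D0: "D 0 k = - real k * (-1)^k"
  unfolding D_def A_def Bs_def using b0[of k] by simp

lemma D1: "D 1 k = (-1)^k"
  using D_rec[of 0 k] D0[of k] D0[of "Suc k"] by (simp add: algebra_simps)

lemma D2: "D (Suc (Suc m)) k = 0"
proof (induction m arbitrary: k)
  case 0
  then show ?case using D_rec[of 1 k] D1[of k] D1[of "Suc k"] by simp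
next
  case (Suc m)
  then show ?case using D_rec[of "Suc (Suc m)" k] by simp
qed

lemma main_eq:
  assumes "k \<le> n"
  shows "(\<Sum>j=0..n-k. real ((n-k) choose j) * bernoulli_num (j+k))
       = (\<Sum>j=0..k. real (k choose j) * (-1)^j * bernoulli_num (n-j)) + D (n-k) k"
  using assms unfolding D_def A_def Bs_def atLeast0AtMost by simp

theorem mainTheorem3:
  fixes n k :: nat
  assumes "k \<le> n"
  shows "(k \<le> n - 2 \<and> n \<ge> 2 \<longrightarrow>
           (\<Sum>j=0..n-k. real ((n-k) choose j) * bernoulli_num (j+k))
             = (\<Sum>j=0..k. real (k choose j) * (-1)^j * bernoulli_num (n-j)))
       \<and> (k = n - 1 \<and> n \<ge> 1 \<longrightarrow>
           (\<Sum>j=0..n-k. real ((n-k) choose j) * bernoulli_num (j+k))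
             = (\<Sum>j=0..k. real (k choose j) * (-1)^j * bernoulli_num (n-j)) + (-1)^(n-1))
       \<and> (k = n \<longrightarrow>
           (\<Sum>j=0..n-k. real ((n-k) choose j) * bernoulli_num (j+k))
             = (\<Sum>j=0..k. real (k choose j) * (-1)^j * bernoulli_num (n-j)) + real n * (-1)^(n-1))"
proof (intro conjI impI)
  assume h2: "k \<le> n - 2 \<and> n \<ge> 2"
  define m where "m = n - k - 2"
  have m: "n - k = Suc (Suc m)" using h2 unfolding m_def by linarith
  show "(\<Sum>j=0..n-k. real ((n-k) choose j) * bernoulli_num (j+k))
             = (\<Sum>j=0..k. real (k choose j) * (-1)^j * bernoulli_num (n-j))"
    using main_eq[OF assms] m D2 by simp
next
  assume h: "k = n - 1 \<and> n \<ge> 1"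
  hence "n - k = 1" by simp
  moreover have "n - 1 = k" using h by simp
  ultimately show "(\<Sum>j=0..n-k. real ((n-k) choose j) * bernoulli_num (j+k))
             = (\<Sum>j=0..k. real (k choose j) * (-1)^j * bernoulli_num (n-j)) + (-1)^(n-1)"
    using main_eq[OF assms] D1 by simp
next
  assume h: "k = n"
  have "D 0 n = real n * (-1)^(n-1)"
    by (cases n) (simp_all add: D0 algebra_simps)
  thus "(\<Sum>j=0..n-k. real ((n-k) choose j) * bernoulli_num (j+k))
             = (\<Sum>j=0..k. real (k choose j) * (-1)^j * bernoulli_num (n-j)) + real n * (-1)^(n-1)"
    using main_eq[OF assms] h by simp
qed

end
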